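(* In the setting described in the context, $$|\eta_h^{(2)}|-\gamma\le|J(u)-J(\tilde u)|\le|\eta_h^{(2)}|+\gamma,$$ where $$\gamma:=|J(u)-J(u_h^{(2)})|+|\mathcal{R}^{(3)}-\mathcal{R}^{(3)(2)}|+|\rho(\tilde u)(\tilde z)|+|\mathcal{R}^{(3)}|.$$
   Context: Let $U$ and $V$ be real Banach spaces with dual $V^*$. Let $\mathcal{A}:U\to V^*$ be a (nonlinear) operator that is three times continuously Fréchet differentiable, and let $J:U\to\mathbb{R}$ be three times continuously Fréchet differentiable. Notation: $\mathcal{A}(w)(v)$ is the value of $\mathcal{A}(w)\in V^*$ at $v\in V$. For fixed $v$, $\mathcal{A}'(w)(\varphi,v)$, $\mathcal{A}''(w)(\varphi,\psi,v)$ and $\mathcal{A}'''(w)(\varphi,\psi,\chi,v)$ denote the first, second and third Fréchet derivatives of $w\mapsto\mathcal{A}(w)(v)$ at $w$ in the directions $\varphi,\psi,\chi\in U$. Analogously, $J'(w)(\varphi)$ and $J'''(w)(\varphi,\psi,\chi)$ denote derivatives of $J$. Let $u\in U$ satisfy $\mathcal{A}(u)(v)=0$ for all $v\in V$, and let $z\in V$ satisfy $\mathcal{A}'(u)(\varphi,z)=J'(u)(\varphi)$ for all $\varphi\in U$. Let $U_h^{(2)}\subset U$ and $V_h^{(2)}\subset V$ be finite-dimensional subspaces. Let $u_h^{(2)}\in U_h^{(2)}$ satisfy $\mathcal{A}(u_h^{(2)})(v)=0$ for all $v\in V_h^{(2)}$. Let $z_h^{(2)}\in V_h^{(2)}$ satisfy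 $\mathcal{A}'(u_h^{(2)})(\varphi,z_h^{(2)})=J'(u_h^{(2)})(\varphi)$ for all $\varphi\in U_h^{(2)}$. Let $\tilde u\in U_h^{(2)}$ and $\tilde z\in V_h^{(2)}$ be arbitrary fixed elements. Define $\rho(\tilde u)(v):=-\mathcal{A}(\tilde u)(v)$ and $\rho^*(\tilde u,\tilde z)(\varphi):=J'(\tilde u)(\varphi)-\mathcal{A}'(\tilde u)(\varphi,\tilde z)$. With $e:=u-\tilde u$ and $e^*:=z-\tilde z$, define $$\mathcal{R}^{(3)}:=\frac12\int_0^1\Big[J'''(\tilde u+se)(e,e,e)-\mathcal{A}'''(\tilde u+se)(e,e,e,\tilde z+se^* )-3\mathcal{A}''(\tilde u+se)(e,e,e^* )\Big]s(s-1)\,ds.$$ Let $\mathcal{R}^{(3)(2)}$ be the same expression with $e,e^*,z$ replaced by $e^{(2)}:=u_h^{(2)}-\tilde u$, $e^{(2),*}:=z_h^{(2)}-\tilde z$, $z_h^{(2)}$. Define $\eta_h^{(2)}:=\tfrac12\rho(\tilde u)(z_h^{(2)}-\tilde z)+\tfrac12\rho^*(\tilde u,\tilde z)(u_h^{(2)}-\tilde u)$. *)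

theory Defs
  imports "HOL-Analysis.Analysis"
begin

text \<open>Dual space V* is rendered as the Banach space of bounded linear functionals
  'v =>L real.  Derivatives are blinfun-valued; the k-th derivative applied to
  directions phi, psi, chi and then to v.\<close>

definition rho :: "('u \<Rightarrow> ('v::real_normed_vector \<Rightarrow>\<^sub>L real)) \<Rightarrow> 'u \<Rightarrow> 'v \<Rightarrow> real" where
  "rho A ut v = - blinfun_apply (A ut) v"

definition rho_star ::
  "('u::real_normed_vector \<Rightarrow> ('u \<Rightarrow>\<^sub>L real)) \<Rightarrow>
   ('u \<Rightarrow> ('u \<Rightarrow>\<^sub>L ('v::real_normed_vector \<Rightarrow>\<^sub>L real))) \<Rightarrow> 'u \<Rightarrow> 'v \<Rightarrow> 'u \<Rightarrow> real" where
  "rho_star J1 A1 ut zt phi = blinfun_apply (J1 ut) phi - blinfun_apply (blinfun_apply (A1 ut) phi) zt"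

definition R3 ::
  "('u::real_normed_vector \<Rightarrow> ('u \<Rightarrow>\<^sub>L ('u \<Rightarrow>\<^sub>L ('u \<Rightarrow>\<^sub>L real)))) \<Rightarrow>
   ('u \<Rightarrow> ('u \<Rightarrow>\<^sub>L ('u \<Rightarrow>\<^sub>L ('v::real_normed_vector \<Rightarrow>\<^sub>L real)))) \<Rightarrow>
   ('u \<Rightarrow> ('u \<Rightarrow>\<^sub>L ('u \<Rightarrow>\<^sub>L ('u \<Rightarrow>\<^sub>L ('v \<Rightarrow>\<^sub>L real))))) \<Rightarrow>
   'u \<Rightarrow> 'v \<Rightarrow> 'u \<Rightarrow> 'v \<Rightarrow> real" where
  "R3 J3 A2 A3 ut zt e es =
     1/2 * integral {0..1} (\<lambda>s::real.
       (blinfun_apply (blinfun_apply (blinfun_apply (J3 (ut + s *\<^sub>R e)) e) e) e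
        - blinfun_apply (blinfun_apply (blinfun_apply (blinfun_apply (A3 (ut + s *\<^sub>R e)) e) e) e) (zt + s *\<^sub>R es)
        - 3 * blinfun_apply (blinfun_apply (blinfun_apply (A2 (ut + s *\<^sub>R e)) e) e) es)
       * (s * (s - 1)))"

definition eta ::
  "('u::real_normed_vector \<Rightarrow> ('u \<Rightarrow>\<^sub>L real)) \<Rightarrow>
   ('u \<Rightarrow> ('v::real_normed_vector \<Rightarrow>\<^sub>L real)) \<Rightarrow>
   ('u \<Rightarrow> ('u \<Rightarrow>\<^sub>L ('v \<Rightarrow>\<^sub>L real))) \<Rightarrow> 'u \<Rightarrow> 'v \<Rightarrow> 'u \<Rightarrow> 'v \<Rightarrow> real" where
  "eta J1 A A1 ut zt uh zh = 1/2 * rho A ut (zh - zt) + 1/2 * rho_star J1 A1 ut zt (uh - ut)"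

end

theory Submission
  imports Defs
begin

lemma path_deriv:
  assumes "\<And>w. (F has_derivative blinfun_apply (F1 w)) (at w)"
  shows "((\<lambda>s::real. F (ut + s *\<^sub>R e)) has_derivative (\<lambda>h. h *\<^sub>R blinfun_apply (F1 (ut + s *\<^sub>R e)) e)) (at s within S)"
proof -
  have "((\<lambda>s::real. ut + s *\<^sub>R e) has_derivative (\<lambda>h. h *\<^sub>R e)) (at s within S)"
    by (auto intro!: derivative_eq_intros)
  from has_derivative_compose[OF this assms]
  show ?thesis by (simp add: blinfun.scaleR_right)
qed

lemma ap:
  assumes "(X has_derivative (\<lambda>h. h *\<^sub>R X')) (at s within S)"
    "(y has_derivative (\<lambda>h. h *\<^sub>R y')) (at s within S)"
  shows "((\<lambda>s. blinfun_apply (X s) (y s)) has_derivative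
     (\<lambda>h. h *\<^sub>R (blinfun_apply X' (y s) + blinfun_apply (X s) y'))) (at s within S)"
  using blinfun.FDERIV[OF assms]
  by (simp add: blinfun.scaleR_right blinfun.scaleR_left scaleR_add_right add.commute)

lemma cst: "((\<lambda>s. c) has_derivative (\<lambda>h. h *\<^sub>R 0)) F"
  by simp

lemma lin: "((\<lambda>s::real. zt + s *\<^sub>R es) has_derivative (\<lambda>h. h *\<^sub>R es)) F"
  by (auto intro!: derivative_eq_intros)

lemma diffR: "(f has_derivative (\<lambda>h. h *\<^sub>R a)) F \<Longrightarrow> (g has_derivative (\<lambda>h. h *\<^sub>R b)) F
  \<Longrightarrow> ((\<lambda>s. f s - g s) has_derivative (\<lambda>h. h *\<^sub>R (a - b))) F"
  by (drule (1) has_derivative_diff) (simp add: scaleR_diff_right)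

lemma addR: "(f has_derivative (\<lambda>h. h *\<^sub>R a)) F \<Longrightarrow> (g has_derivative (\<lambda>h. h *\<^sub>R b)) F
  \<Longrightarrow> ((\<lambda>s. f s + g s) has_derivative (\<lambda>h. h *\<^sub>R (a + b))) F"
  by (drule (1) has_derivative_add) (simp add: scaleR_add_right)

lemma eqR: "(f has_derivative (\<lambda>h. h *\<^sub>R a)) F \<Longrightarrow> a = b \<Longrightarrow> (f has_derivative (\<lambda>h. h *\<^sub>R b)) F"
  by simp

lemma key:
  fixes A :: "'u::banach \<Rightarrow> ('v::banach \<Rightarrow>\<^sub>L real)"
    and A1 :: "'u \<Rightarrow> ('u \<Rightarrow>\<^sub>L ('v \<Rightarrow>\<^sub>L real))"
    and A2 :: "'u \<Rightarrow> ('u \<Rightarrow>\<^sub>L ('u \<Rightarrow>\<^sub>L ('v \<Rightarrow>\<^sub>L real)))"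
    and A3 :: "'u \<Rightarrow> ('u \<Rightarrow>\<^sub>L ('u \<Rightarrow>\<^sub>L ('u \<Rightarrow>\<^sub>L ('v \<Rightarrow>\<^sub>L real))))"
    and J :: "'u \<Rightarrow> real"
    and J1 :: "'u \<Rightarrow> ('u \<Rightarrow>\<^sub>L real)"
    and J2 :: "'u \<Rightarrow> ('u \<Rightarrow>\<^sub>L ('u \<Rightarrow>\<^sub>L real))"
    and J3 :: "'u \<Rightarrow> ('u \<Rightarrow>\<^sub>L ('u \<Rightarrow>\<^sub>L ('u \<Rightarrow>\<^sub>L real)))"
  assumes dA: "\<And>w. (A has_derivative blinfun_apply (A1 w)) (at w)"
    and dA1: "\<And>w. (A1 has_derivative blinfun_apply (A2 w)) (at w)"
    and dA2: "\<And>w. (A2 has_derivative blinfun_apply (A3 w)) (at w)"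
    and dJ: "\<And>w. (J has_derivative blinfun_apply (J1 w)) (at w)"
    and dJ1: "\<And>w. (J1 has_derivative blinfun_apply (J2 w)) (at w)"
    and dJ2: "\<And>w. (J2 has_derivative blinfun_apply (J3 w)) (at w)"
    and p1: "blinfun_apply (A a) b = 0"
    and p2: "blinfun_apply (A a) (b - zt) = 0"
    and d1: "blinfun_apply (blinfun_apply (A1 a) (a - ut)) b = blinfun_apply (J1 a) (a - ut)"
  shows "J a - J ut = eta J1 A A1 ut zt a b + rho A ut zt + R3 J3 A2 A3 ut zt (a - ut) (b - zt)"
proof -
  define e where "e = a - ut"
  define es where "es = b - zt"
  define p where "p s = ut + s *\<^sub>R e" for s :: real
  define q where "q s = zt + s *\<^sub>R es" for s :: real
  define g where "g s = J (p s) - blinfun_apply (A (p s)) (q s)" for s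
  define g1 where "g1 s = blinfun_apply (J1 (p s)) e - (blinfun_apply (blinfun_apply (A1 (p s)) e) (q s) + blinfun_apply (A (p s)) es)" for s
  define g2 where "g2 s = blinfun_apply (blinfun_apply (J2 (p s)) e) e - (blinfun_apply (blinfun_apply (blinfun_apply (A2 (p s)) e) e) (q s) + blinfun_apply (blinfun_apply (A1 (p s)) e) es + blinfun_apply (blinfun_apply (A1 (p s)) e) es)" for s
  define g3 where "g3 s = blinfun_apply (blinfun_apply (blinfun_apply (J3 (p s)) e) e) e - (blinfun_apply (blinfun_apply (blinfun_apply (blinfun_apply (A3 (p s)) e) e) e) (q s) + blinfun_apply (blinfun_apply (blinfun_apply (A2 (p s)) e) e) es + (blinfun_apply (blinfun_apply (blinfun_apply (A2 (p s)) e) e) es + blinfun_apply (blinfun_apply (blinfun_apply (A2 (p s)) e) e) es))" for s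
  have q: "(q has_derivative (\<lambda>h. h *\<^sub>R es)) (at s within S)" for s S
    unfolding q_def by (rule lin)
  have PJ: "((\<lambda>s. J (p s)) has_derivative (\<lambda>h. h *\<^sub>R blinfun_apply (J1 (p s)) e)) (at s within S)" for s S
    unfolding p_def by (rule path_deriv[OF dJ])
  have PJ1: "((\<lambda>s. J1 (p s)) has_derivative (\<lambda>h. h *\<^sub>R blinfun_apply (J2 (p s)) e)) (at s within S)" for s S
    unfolding p_def by (rule path_deriv[OF dJ1])
  have PJ2: "((\<lambda>s. J2 (p s)) has_derivative (\<lambda>h. h *\<^sub>R blinfun_apply (J3 (p s)) e)) (at s within S)" for s S
    unfolding p_def by (rule path_deriv[OF dJ2])
  have PA: "((\<lambda>s. A (p s)) has_derivative (\<lambda>h. h *\<^sub>R blinfun_apply (A1 (p s)) e)) (at s within S)" for s S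
    unfolding p_def by (rule path_deriv[OF dA])
  have PA1: "((\<lambda>s. A1 (p s)) has_derivative (\<lambda>h. h *\<^sub>R blinfun_apply (A2 (p s)) e)) (at s within S)" for s S
    unfolding p_def by (rule path_deriv[OF dA1])
  have PA2: "((\<lambda>s. A2 (p s)) has_derivative (\<lambda>h. h *\<^sub>R blinfun_apply (A3 (p s)) e)) (at s within S)" for s S
    unfolding p_def by (rule path_deriv[OF dA2])
  have G: "(g has_derivative (\<lambda>h. h *\<^sub>R g1 s)) (at s within S)" for s S
    unfolding g_def
    by (rule eqR[OF diffR[OF PJ ap[OF PA q]]]) (simp add: g1_def)
  have G1: "(g1 has_derivative (\<lambda>h. h *\<^sub>R g2 s)) (at s within S)" for s S
    unfolding g1_def
    by (rule eqR[OF diffR[OF ap[OF PJ1 cst] addR[OF ap[OF ap[OF PA1 cst] q] ap[OF PA cst]]]]) (simp add: g2_def)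
  have G2: "(g2 has_derivative (\<lambda>h. h *\<^sub>R g3 s)) (at s within S)" for s S
    unfolding g2_def
    by (rule eqR[OF diffR[OF ap[OF ap[OF PJ2 cst] cst] addR[OF addR[OF ap[OF ap[OF ap[OF PA2 cst] cst] q] ap[OF ap[OF PA1 cst] cst]] ap[OF ap[OF PA1 cst] cst]]]]) (simp add: g3_def)
  define H where "H s = g2 s * (s * (s - 1)) - g1 s * (2 * s - 1) + 2 * g s" for s
  have "(H has_vector_derivative g3 s * (s * (s - 1))) (at s within {0..1})" for s
  proof -
    have a: "(g has_real_derivative g1 s) (at s within {0..1})"
      using G[of s "{0..1}"] by (simp add: has_real_derivative_iff_has_vector_derivative has_vector_derivative_def)
    have b: "(g1 has_real_derivative g2 s) (at s within {0..1})"
      using G1[of s "{0..1}"] by (simp add: has_real_derivative_iff_has_vector_derivative has_vector_derivative_def)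
    have c: "(g2 has_real_derivative g3 s) (at s within {0..1})"
      using G2[of s "{0..1}"] by (simp add: has_real_derivative_iff_has_vector_derivative has_vector_derivative_def)
    have "(H has_real_derivative g3 s * (s * (s - 1))) (at s within {0..1})"
    proof -
      have d: "((\<lambda>s::real. s * (s - 1)) has_real_derivative 2 * s - 1) (at s within {0..1})"
        by (rule derivative_eq_intros refl)+ simp
      have d2: "((\<lambda>s::real. 2 * s - 1) has_real_derivative 2) (at s within {0..1})"
        by (rule derivative_eq_intros refl)+ simp
      have "(H has_real_derivative (g3 s * (s * (s - 1)) + g2 s * (2 * s - 1)) - (g2 s * (2 * s - 1) + g1 s * 2) + 2 * g1 s) (at s within {0..1})"
      proof -
        have m1: "((\<lambda>x. g2 x * (x * (x - 1))) has_real_derivative g3 s * (s * (s - 1)) + g2 s * (2 * s - 1)) (at s within {0..1})"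
          using DERIV_mult[OF c d] by (simp add: algebra_simps)
        have m2: "((\<lambda>x. g1 x * (2 * x - 1)) has_real_derivative g2 s * (2 * s - 1) + g1 s * 2) (at s within {0..1})"
          using DERIV_mult[OF b d2] by (simp add: algebra_simps)
        show ?thesis unfolding H_def
          by (intro DERIV_add DERIV_diff DERIV_cmult m1 m2 a)
      qed
      then show ?thesis by (simp add: algebra_simps)
    qed
    then show ?thesis by (simp add: has_real_derivative_iff_has_vector_derivative)
  qed
  then have "((\<lambda>s. g3 s * (s * (s - 1))) has_integral H 1 - H 0) {0..1}"
    by (intro fundamental_theorem_of_calculus) auto
  then have I: "integral {0..1} (\<lambda>s. g3 s * (s * (s - 1))) = H 1 - H 0"
    by (rule integral_unique)
  have R: "R3 J3 A2 A3 ut zt e es = 1/2 * (H 1 - H 0)"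
  proof -
    have "(\<lambda>s::real. (blinfun_apply (blinfun_apply (blinfun_apply (J3 (ut + s *\<^sub>R e)) e) e) e
        - blinfun_apply (blinfun_apply (blinfun_apply (blinfun_apply (A3 (ut + s *\<^sub>R e)) e) e) e) (zt + s *\<^sub>R es)
        - 3 * blinfun_apply (blinfun_apply (blinfun_apply (A2 (ut + s *\<^sub>R e)) e) e) es)
       * (s * (s - 1))) = (\<lambda>s. g3 s * (s * (s - 1)))"
      by (rule ext) (simp add: g3_def p_def q_def)
    then show ?thesis unfolding R3_def I[symmetric] by simp
  qed
  have g11: "g1 1 = 0" unfolding g1_def p_def q_def e_def es_def using p2 d1 by simp
  have g1: "g 1 = J a" unfolding g_def p_def q_def e_def es_def using p1 by simp
  have g0: "g 0 = J ut - blinfun_apply (A ut) zt" unfolding g_def p_def q_def by simp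
  have g10: "g1 0 = blinfun_apply (J1 ut) e - (blinfun_apply (blinfun_apply (A1 ut) e) zt + blinfun_apply (A ut) es)"
    unfolding g1_def p_def q_def by simp
  have H1: "H 1 = 2 * J a" unfolding H_def using g11 g1 by simp
  have H0: "H 0 = g1 0 + 2 * g 0" unfolding H_def by simp
  have et: "eta J1 A A1 ut zt a b = 1/2 * g1 0"
    unfolding eta_def rho_def rho_star_def g10 e_def[symmetric] es_def[symmetric] by simp
  have rh: "rho A ut zt = - blinfun_apply (A ut) zt" by (simp add: rho_def)
  show ?thesis unfolding e_def[symmetric] es_def[symmetric] R et rh H1 H0 g0 by (simp add: field_simps)
qed

theorem mainTheorem8:
  fixes A :: "'u::banach \<Rightarrow> ('v::banach \<Rightarrow>\<^sub>L real)"
    and A1 :: "'u \<Rightarrow> ('u \<Rightarrow>\<^sub>L ('v \<Rightarrow>\<^sub>L real))"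
    and A2 :: "'u \<Rightarrow> ('u \<Rightarrow>\<^sub>L ('u \<Rightarrow>\<^sub>L ('v \<Rightarrow>\<^sub>L real)))"
    and A3 :: "'u \<Rightarrow> ('u \<Rightarrow>\<^sub>L ('u \<Rightarrow>\<^sub>L ('u \<Rightarrow>\<^sub>L ('v \<Rightarrow>\<^sub>L real))))"
    and J :: "'u \<Rightarrow> real"
    and J1 :: "'u \<Rightarrow> ('u \<Rightarrow>\<^sub>L real)"
    and J2 :: "'u \<Rightarrow> ('u \<Rightarrow>\<^sub>L ('u \<Rightarrow>\<^sub>L real))"
    and J3 :: "'u \<Rightarrow> ('u \<Rightarrow>\<^sub>L ('u \<Rightarrow>\<^sub>L ('u \<Rightarrow>\<^sub>L real)))"
    and u ut uh :: 'u and z zt zh :: 'v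
    and Uh :: "'u set" and Vh :: "'v set"
  assumes dA: "\<And>w. (A has_derivative blinfun_apply (A1 w)) (at w)"
    and dA1: "\<And>w. (A1 has_derivative blinfun_apply (A2 w)) (at w)"
    and dA2: "\<And>w. (A2 has_derivative blinfun_apply (A3 w)) (at w)"
    and cA3: "continuous_on UNIV A3"
    and dJ: "\<And>w. (J has_derivative blinfun_apply (J1 w)) (at w)"
    and dJ1: "\<And>w. (J1 has_derivative blinfun_apply (J2 w)) (at w)"
    and dJ2: "\<And>w. (J2 has_derivative blinfun_apply (J3 w)) (at w)"
    and cJ3: "continuous_on UNIV J3"
    and primal: "\<And>v. blinfun_apply (A u) v = 0"
    and dual: "\<And>\<phi>. blinfun_apply (blinfun_apply (A1 u) \<phi>) z = blinfun_apply (J1 u) \<phi>"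
    and Uh_sub: "subspace Uh" and Uh_fin: "\<exists>B. finite B \<and> span B = Uh"
    and Vh_sub: "subspace Vh" and Vh_fin: "\<exists>B. finite B \<and> span B = Vh"
    and uh_in: "uh \<in> Uh"
    and primal_h: "\<And>v. v \<in> Vh \<Longrightarrow> blinfun_apply (A uh) v = 0"
    and zh_in: "zh \<in> Vh"
    and dual_h: "\<And>\<phi>. \<phi> \<in> Uh \<Longrightarrow>
        blinfun_apply (blinfun_apply (A1 uh) \<phi>) zh = blinfun_apply (J1 uh) \<phi>"
    and ut_in: "ut \<in> Uh" and zt_in: "zt \<in> Vh"
  shows "\<bar>eta J1 A A1 ut zt uh zh\<bar>
           - (\<bar>J u - J uh\<bar> + \<bar>R3 J3 A2 A3 ut zt (u - ut) (z - zt) - R3 J3 A2 A3 ut zt (uh - ut) (zh - zt)\<bar>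
              + \<bar>rho A ut zt\<bar> + \<bar>R3 J3 A2 A3 ut zt (u - ut) (z - zt)\<bar>)
         \<le> \<bar>J u - J ut\<bar>
       \<and> \<bar>J u - J ut\<bar>
         \<le> \<bar>eta J1 A A1 ut zt uh zh\<bar>
           + (\<bar>J u - J uh\<bar> + \<bar>R3 J3 A2 A3 ut zt (u - ut) (z - zt) - R3 J3 A2 A3 ut zt (uh - ut) (zh - zt)\<bar>
              + \<bar>rho A ut zt\<bar> + \<bar>R3 J3 A2 A3 ut zt (u - ut) (z - zt)\<bar>)"
proof -
  have a: "uh - ut \<in> Uh" using Uh_sub uh_in ut_in by (simp add: subspace_diff)
  have b: "zh - zt \<in> Vh" using Vh_sub zh_in zt_in by (simp add: subspace_diff)
  have K: "J uh - J ut = eta J1 A A1 ut zt uh zh + rho A ut zt + R3 J3 A2 A3 ut zt (uh - ut) (zh - zt)"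
    by (rule key[OF dA dA1 dA2 dJ dJ1 dJ2 primal_h[OF zh_in] primal_h[OF b] dual_h[OF a]])
  show ?thesis using K by linarith
qed

end
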